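(* Let $(X,G)$ be a $G$-system with metric $d$ such that $\rho=\mathrm{diam}_d(X)<1$ and the map $d:X\times X\to[0,\rho]$ is surjective. Suppose $\overline{\mathrm{mdim}}_{\mathrm M}(X,G,d)<\infty$. Then the maps $$(\mathcal A^+_d(X),\mathcal W)\to\mathbb R,\ \zeta_d\mapsto\overline{\mathrm{mdim}}_{\mathrm M}(X,G,\zeta_d)\quad\text{and}\quad(\mathcal A^+_d(X),\mathcal W)\to\mathbb R,\ \zeta_d\mapsto\underline{\mathrm{mdim}}_{\mathrm M}(X,G,\zeta_d)$$ are continuous.
   Context: $G$ is a countable discrete amenable group; a $G$-system is a compact metric space with a continuous $G$-action. $\mathcal A[0,\rho]$ is the set of continuous, increasing, subadditive $\zeta:[0,\rho]\to[0,\infty)$ with $\zeta^{-1}(0)=\{0\}$; $k_m(\zeta)=\liminf_{\varepsilon\to0^+}\frac{\log\zeta(\varepsilon)}{\log\varepsilon}$, $k_M(\zeta)=\limsup_{\varepsilon\to0^+}\frac{\log\zeta(\varepsilon)}{\log\varepsilon}$; $\mathcal A^+[0,\rho]=\{\zeta\in\mathcal A[0,\rho]:k_m(\zeta)=k_M(\zeta)>0\}$. For $\zeta\in\mathcal A^+[0,\rho]$ and $\varepsilon>0$ let $\tilde B(\zeta,\varepsilon)=\{\vartheta\in\mathcal A^+[0,\rho]:\zeta(x)(x^\varepsilon-1)<\vartheta(x)-\zeta(x)<\zeta(x)\frac{1-x^\varepsilon}{x^\varepsilon}\text{ for all }x\in(0,\rho]\}$; $\mathcal T$ is the topology on $\mathcal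 A^+[0,\rho]$ having these sets as a subbase. $\zeta_d(x,y)=\zeta(d(x,y))$, and $\mathcal A^+_d(X)=\{\zeta_d:\zeta\in\mathcal A^+[0,\rho]\}$; since $d$ is surjective onto $[0,\rho]$, $\zeta\mapsto\zeta_d$ is a bijection $\mathcal A^+[0,\rho]\to\mathcal A^+_d(X)$, and $\mathcal W$ is the topology on $\mathcal A^+_d(X)$ making this bijection a homeomorphism from $(\mathcal A^+[0,\rho],\mathcal T)$. Metric mean dimensions: for a Følner sequence $(F_n)$ and metric $\rho'$, $\rho'_F(x,y)=\max_{g\in F}\rho'(gx,gy)$, $s_F(\rho',\varepsilon,X)$ the maximal cardinality of a subset whose distinct points have $\rho'_F$-distance $>\varepsilon$; $\overline{\mathrm{mdim}}_{\mathrm M}(X,G,\rho')=\limsup_{\varepsilon\to0}\frac1{|\log\varepsilon|}\limsup_n\frac1{|F_n|}\log s_{F_n}(\rho',\varepsilon,X)$, $\underline{\mathrm{mdim}}_{\mathrm M}$ the same with $\liminf_{\varepsilon\to0}$. *)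

theory Defs
  imports "HOL-Analysis.Analysis"
begin

text \<open>A continuous (left) action of the (multiplicatively meant, additively written,
  not necessarily commutative) discrete group 'g on the compact metric space 'x.\<close>
definition continuous_action :: "('g::group_add \<Rightarrow> 'x::metric_space \<Rightarrow> 'x) \<Rightarrow> bool" where
  "continuous_action T \<longleftrightarrow> T 0 = id \<and> (\<forall>g h. T (g + h) = T g \<circ> T h)
      \<and> (\<forall>g. continuous_on UNIV (T g))"

definition folner_seq :: "(nat \<Rightarrow> 'g::group_add set) \<Rightarrow> bool" where
  "folner_seq F \<longleftrightarrow> (\<forall>n. finite (F n) \<and> F n \<noteq> {}) \<and>
     (\<forall>g. (\<lambda>n. real (card (((\<lambda>h. g + h) ` F n - F n) \<union> (F n - (\<lambda>h. g + h) ` F n)))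
                 / real (card (F n))) \<longlonglongrightarrow> 0)"

text \<open>A countable discrete group is amenable iff it admits a Folner sequence.\<close>
definition amenable_group :: "'g::group_add itself \<Rightarrow> bool" where
  "amenable_group _ \<longleftrightarrow> (\<exists>F::nat \<Rightarrow> 'g set. folner_seq F)"

definition sep_num :: "('g \<Rightarrow> 'x \<Rightarrow> 'x) \<Rightarrow> 'g set \<Rightarrow> ('x \<Rightarrow> 'x \<Rightarrow> real) \<Rightarrow> real \<Rightarrow> real" where
  "sep_num T F r eps = Sup {real (card S) | S. finite S \<and>
      (\<forall>x\<in>S. \<forall>y\<in>S. x \<noteq> y \<longrightarrow> Max ((\<lambda>g. r (T g x) (T g y)) ` F) > eps)}"

definition upper_mdim :: "(nat \<Rightarrow> 'g set) \<Rightarrow> ('g \<Rightarrow> 'x \<Rightarrow> 'x) \<Rightarrow> ('x \<Rightarrow> 'x \<Rightarrow> real) \<Rightarrow> ereal" where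
  "upper_mdim F T r = Limsup (at_right 0) (\<lambda>eps. ereal (1 / \<bar>ln eps\<bar>) *
      limsup (\<lambda>n. ereal (ln (sep_num T (F n) r eps) / real (card (F n)))))"

definition lower_mdim :: "(nat \<Rightarrow> 'g set) \<Rightarrow> ('g \<Rightarrow> 'x \<Rightarrow> 'x) \<Rightarrow> ('x \<Rightarrow> 'x \<Rightarrow> real) \<Rightarrow> ereal" where
  "lower_mdim F T r = Liminf (at_right 0) (\<lambda>eps. ereal (1 / \<bar>ln eps\<bar>) *
      limsup (\<lambda>n. ereal (ln (sep_num T (F n) r eps) / real (card (F n)))))"

text \<open>Functions on [0,rho] are represented as functions real => real that vanish outside
  [0,rho] (canonical representative).\<close>
definition classA :: "real \<Rightarrow> (real \<Rightarrow> real) set" where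
  "classA \<rho> = {\<zeta>. continuous_on {0..\<rho>} \<zeta> \<and> mono_on {0..\<rho>} \<zeta>
      \<and> (\<forall>x y. 0 \<le> x \<and> 0 \<le> y \<and> x + y \<le> \<rho> \<longrightarrow> \<zeta> (x + y) \<le> \<zeta> x + \<zeta> y)
      \<and> (\<forall>x\<in>{0..\<rho>}. \<zeta> x \<ge> 0)
      \<and> {x\<in>{0..\<rho>}. \<zeta> x = 0} = {0}
      \<and> (\<forall>x. x \<notin> {0..\<rho>} \<longrightarrow> \<zeta> x = 0)}"

definition k_m :: "(real \<Rightarrow> real) \<Rightarrow> ereal" where
  "k_m \<zeta> = Liminf (at_right 0) (\<lambda>eps. ereal (ln (\<zeta> eps) / ln eps))"

definition k_M :: "(real \<Rightarrow> real) \<Rightarrow> ereal" where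
  "k_M \<zeta> = Limsup (at_right 0) (\<lambda>eps. ereal (ln (\<zeta> eps) / ln eps))"

definition classAplus :: "real \<Rightarrow> (real \<Rightarrow> real) set" where
  "classAplus \<rho> = {\<zeta>\<in>classA \<rho>. k_m \<zeta> = k_M \<zeta> \<and> k_m \<zeta> > 0}"

definition Btilde :: "real \<Rightarrow> (real \<Rightarrow> real) \<Rightarrow> real \<Rightarrow> (real \<Rightarrow> real) set" where
  "Btilde \<rho> \<zeta> e = {\<theta>\<in>classAplus \<rho>. \<forall>x\<in>{0<..\<rho>}.
      \<zeta> x * (x powr e - 1) < \<theta> x - \<zeta> x \<and>
      \<theta> x - \<zeta> x < \<zeta> x * (1 - x powr e) / x powr e}"

definition topT :: "real \<Rightarrow> (real \<Rightarrow> real) topology" where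
  "topT \<rho> = topology_generated_by {Btilde \<rho> \<zeta> e | \<zeta> e. \<zeta> \<in> classAplus \<rho> \<and> e > 0}"

definition compose_metric :: "('x \<Rightarrow> 'x \<Rightarrow> real) \<Rightarrow> (real \<Rightarrow> real) \<Rightarrow> 'x \<Rightarrow> 'x \<Rightarrow> real" where
  "compose_metric d \<zeta> = (\<lambda>x y. \<zeta> (d x y))"

definition classAplus_d :: "real \<Rightarrow> ('x \<Rightarrow> 'x \<Rightarrow> real) \<Rightarrow> ('x \<Rightarrow> 'x \<Rightarrow> real) set" where
  "classAplus_d \<rho> d = compose_metric d ` classAplus \<rho>"

text \<open>W: the topology transported from T along the bijection zeta |-> zeta_d
  (generated by the images of the subbasic sets; since the map is injective, this is
  exactly the topology making it a homeomorphism).\<close>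
definition topW :: "real \<Rightarrow> ('x \<Rightarrow> 'x \<Rightarrow> real) \<Rightarrow> ('x \<Rightarrow> 'x \<Rightarrow> real) topology" where
  "topW \<rho> d = topology_generated_by
      {compose_metric d ` Btilde \<rho> \<zeta> e | \<zeta> e. \<zeta> \<in> classAplus \<rho> \<and> e > 0}"

end

theory Submission
  imports Defs
begin


lemma Limsup_compose_le:
  fixes g :: "'a \<Rightarrow> 'c::complete_linorder"
  assumes "filterlim \<phi> G F"
  shows "Limsup F (\<lambda>x. g (\<phi> x)) \<le> Limsup G g"
  unfolding Limsup_def[of G]
proof (rule INF_greatest)
  fix P assume "P \<in> {P. eventually P G}"
  then have "eventually (\<lambda>x. P (\<phi> x)) F" using assms by (auto simp: filterlim_iff)
  then have "eventually (\<lambda>x. g (\<phi> x) \<le> Sup (g ` Collect P)) F"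
    by (rule eventually_mono) (auto intro: SUP_upper)
  then show "Limsup F (\<lambda>x. g (\<phi> x)) \<le> Sup (g ` Collect P)" by (rule Limsup_bounded)
qed

lemma Liminf_compose_ge:
  fixes g :: "'a \<Rightarrow> 'c::complete_linorder"
  assumes "filterlim \<phi> G F"
  shows "Liminf G g \<le> Liminf F (\<lambda>x. g (\<phi> x))"
  unfolding Liminf_def[of G]
proof (rule SUP_least)
  fix P assume "P \<in> {P. eventually P G}"
  then have "eventually (\<lambda>x. P (\<phi> x)) F" using assms by (auto simp: filterlim_iff)
  then have "eventually (\<lambda>x. Inf (g ` Collect P) \<le> g (\<phi> x)) F"
    by (rule eventually_mono) (auto intro: INF_lower)
  then show "Inf (g ` Collect P) \<le> Liminf F (\<lambda>x. g (\<phi> x))" by (rule Liminf_bounded)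
qed


lemma limsup_ln_mono:
  fixes s1 s2 c :: "nat \<Rightarrow> real"
  assumes "\<And>n. 1 \<le> s1 n \<and> s1 n \<le> s2 n" "\<And>n. c n > 0"
  shows "limsup (\<lambda>n. ereal (ln (s1 n) / c n)) \<le> limsup (\<lambda>n. ereal (ln (s2 n) / c n))"
    "0 \<le> limsup (\<lambda>n. ereal (ln (s1 n) / c n))"
proof -
  have "ln (s1 n) / c n \<le> ln (s2 n) / c n" for n
    using assms[of n] by (intro divide_right_mono) auto
  then show "limsup (\<lambda>n. ereal (ln (s1 n) / c n)) \<le> limsup (\<lambda>n. ereal (ln (s2 n) / c n))"
    by (intro Limsup_mono) auto
  have "0 \<le> ln (s1 n) / c n" for n using assms[of n] by auto
  then have "limsup (\<lambda>n. 0::ereal) \<le> limsup (\<lambda>n. ereal (ln (s1 n) / c n))"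
    by (intro Limsup_mono) auto
  then show "0 \<le> limsup (\<lambda>n. ereal (ln (s1 n) / c n))" by (simp add: Limsup_const)
qed

lemma squeeze_real:
  fixes k v u :: real
  assumes k: "k > 0" and v: "v \<ge> 0"
    and H: "\<And>gg. 0 < gg \<Longrightarrow> gg < k/2 \<Longrightarrow> v * (k-gg) \<le> u \<and> u \<le> v * (k+2 * gg)"
  shows "u = v * k"
proof (rule ccontr)
  assume ne: "u \<noteq> v * k"
  define gg where "gg = min (k/4) (\<bar>u - v * k\<bar> / (4*(v+1)))"
  have g0: "0 < gg" "gg < k/2" using k v ne by (auto simp: gg_def)
  have gb: "gg * (4*(v+1)) \<le> \<bar>u - v * k\<bar>" using v unfolding gg_def
    by (metis min.cobounded2 pos_le_divide_eq add_nonneg_pos zero_less_numeral mult_pos_pos zero_less_one)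
  have "v * (k-gg) \<le> u" "u \<le> v * (k+2 * gg)" using H[OF g0] by auto
  then have "\<bar>u - v * k\<bar> \<le> 2 * gg * v" using v g0 by (auto simp: algebra_simps abs_if)
  also have "\<dots> < gg * (4*(v+1))" using g0 v by (simp add: algebra_simps add_pos_nonneg)
  finally show False using gb by simp
qed


definition sepset :: "('g \<Rightarrow> 'x \<Rightarrow> 'x) \<Rightarrow> 'g set \<Rightarrow> ('x \<Rightarrow> 'x \<Rightarrow> real) \<Rightarrow> real \<Rightarrow> 'x set set" where
  "sepset T F r eps = {S. finite S \<and>
      (\<forall>x\<in>S. \<forall>y\<in>S. x \<noteq> y \<longrightarrow> Max ((\<lambda>g. r (T g x) (T g y)) ` F) > eps)}"

lemma sep_num_alt: "sep_num T F r eps = Sup ((\<lambda>S. real (card S)) ` sepset T F r eps)"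
  unfolding sep_num_def sepset_def by (simp only: setcompr_eq_image mem_Collect_eq)

lemma sepset_iff:
  assumes "finite F" "F \<noteq> {}"
  shows "S \<in> sepset T F r eps \<longleftrightarrow> finite S \<and>
      (\<forall>x\<in>S. \<forall>y\<in>S. x \<noteq> y \<longrightarrow> (\<exists>g\<in>F. r (T g x) (T g y) > eps))"
  using assms by (simp add: sepset_def Max_gr_iff)

lemma sepset_bdd:
  fixes T :: "'g \<Rightarrow> 'x::metric_space \<Rightarrow> 'x"
  assumes cpt: "compact (UNIV :: 'x set)" and cont: "\<And>g. continuous_on UNIV (T g)"
    and F: "finite F" "F \<noteq> {}" and e: "eps > 0"
  shows "bdd_above ((\<lambda>S. real (card S)) ` sepset T F dist eps)"
proof -
  define U where "U c = (\<Inter>g\<in>F. T g -` ball (T g c) (eps/2))" for c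
  have memU: "s \<in> U c \<longleftrightarrow> (\<forall>g\<in>F. dist (T g c) (T g s) < eps/2)" for s c
    unfolding U_def by simp
  have opn: "open (U c)" for c
    unfolding U_def using F(1)
  proof (rule open_INT)
    show "\<forall>g\<in>F. open (T g -` ball (T g c) (eps / 2))"
      using cont by (auto intro: open_vimage)
  qed
  have cov: "UNIV \<subseteq> (\<Union>c\<in>UNIV. U c)"
  proof
    fix s :: 'x
    have "s \<in> U s" unfolding memU using e by simp
    then show "s \<in> (\<Union>c\<in>UNIV. U c)" by (rule UN_I[OF UNIV_I])
  qed
  obtain C where C: "C \<subseteq> UNIV" "finite C" "UNIV \<subseteq> (\<Union>c\<in>C. U c)"
    by (rule compactE_image[OF cpt opn cov])
  have "\<forall>s. \<exists>c. c \<in> C \<and> s \<in> U c"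
  proof
    fix s :: 'x
    have "s \<in> (\<Union>c\<in>C. U c)" using C(3) by (rule subsetD) simp
    then show "\<exists>c. c \<in> C \<and> s \<in> U c" by (simp only: UN_iff) (rule bexE, assumption, rule exI, rule conjI)
  qed
  then have "\<exists>f. \<forall>s. f s \<in> C \<and> s \<in> U (f s)" by (rule choice)
  then obtain f where f: "\<And>s. f s \<in> C \<and> s \<in> U (f s)" by blast
  have "card S \<le> card C" if S: "S \<in> sepset T F dist eps" for S
  proof -
    have "inj_on f S"
    proof (rule inj_onI, rule ccontr)
      fix x y assume xy: "x \<in> S" "y \<in> S" "f x = f y" "x \<noteq> y"
      then obtain g where g: "g \<in> F" "dist (T g x) (T g y) > eps"
        using S F by (auto simp: sepset_iff)
      have d1: "dist (T g (f x)) (T g x) < eps/2" using f[of x] g(1) by (simp add: memU)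
      have d2: "dist (T g (f x)) (T g y) < eps/2" using f[of y] g(1) xy(3) by (simp add: memU)
      have "dist (T g x) (T g y) \<le> dist (T g x) (T g (f x)) + dist (T g (f x)) (T g y)"
        by (rule dist_triangle)
      moreover have "dist (T g x) (T g (f x)) = dist (T g (f x)) (T g x)" by (rule dist_commute)
      ultimately have "dist (T g x) (T g y) < eps" using d1 d2 by linarith
      then show False using g by simp
    qed
    moreover have "f ` S \<subseteq> C" using f by auto
    ultimately show ?thesis by (rule card_inj_on_le[OF _ _ C(2)])
  qed
  then show ?thesis by (intro bdd_aboveI[of _ "real (card C)"]) auto
qed

lemma sep_num_le:
  assumes bdd: "bdd_above ((\<lambda>S. real (card S)) ` sepset T F r2 e2)"
    and incl: "sepset T F r1 e1 \<subseteq> sepset T F r2 e2"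
  shows "sep_num T F r1 e1 \<le> sep_num T F r2 e2"
    and "1 \<le> sep_num T F r1 e1"
    and "bdd_above ((\<lambda>S. real (card S)) ` sepset T F r1 e1)"
proof -
  obtain x :: 'a where True by simp
  have sing: "{x} \<in> sepset T F r1 e1" by (simp add: sepset_def)
  have one: "1 \<in> (\<lambda>S. real (card S)) ` sepset T F r1 e1"
  proof (rule image_eqI)
    show "1 = real (card {x})" by simp
  qed (rule sing)
  have sub: "(\<lambda>S. real (card S)) ` sepset T F r1 e1 \<subseteq> (\<lambda>S. real (card S)) ` sepset T F r2 e2"
    by (rule image_mono[OF incl])
  show b1: "bdd_above ((\<lambda>S. real (card S)) ` sepset T F r1 e1)"
    by (rule bdd_above_mono[OF bdd sub])
  have ne: "(\<lambda>S. real (card S)) ` sepset T F r1 e1 \<noteq> {}" using one by blast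
  show "sep_num T F r1 e1 \<le> sep_num T F r2 e2"
    unfolding sep_num_alt by (rule cSup_subset_mono[OF ne bdd sub])
  show "1 \<le> sep_num T F r1 e1"
    unfolding sep_num_alt by (rule cSup_upper[OF one b1])
qed



lemma classA_facts:
  assumes "\<zeta> \<in> classA \<rho>"
  shows "continuous_on {0..\<rho>} \<zeta>" "mono_on {0..\<rho>} \<zeta>" "\<zeta> 0 = 0" "0 \<le> \<rho>"
    "\<And>x. 0 < x \<Longrightarrow> x \<le> \<rho> \<Longrightarrow> \<zeta> x > 0"
    "\<And>x y. 0 \<le> x \<Longrightarrow> 0 \<le> y \<Longrightarrow> x + y \<le> \<rho> \<Longrightarrow> \<zeta> (x + y) \<le> \<zeta> x + \<zeta> y"
    "\<And>x. x \<notin> {0..\<rho>} \<Longrightarrow> \<zeta> x = 0"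
proof -
  have all: "continuous_on {0..\<rho>} \<zeta> \<and> mono_on {0..\<rho>} \<zeta>
      \<and> (\<forall>x y. 0 \<le> x \<and> 0 \<le> y \<and> x + y \<le> \<rho> \<longrightarrow> \<zeta> (x + y) \<le> \<zeta> x + \<zeta> y)
      \<and> (\<forall>x\<in>{0..\<rho>}. \<zeta> x \<ge> 0)
      \<and> {x\<in>{0..\<rho>}. \<zeta> x = 0} = {0}
      \<and> (\<forall>x. x \<notin> {0..\<rho>} \<longrightarrow> \<zeta> x = 0)"
    using assms unfolding classA_def by (rule CollectD)
  then have C: "continuous_on {0..\<rho>} \<zeta>" and M: "mono_on {0..\<rho>} \<zeta>"
    and SA: "\<forall>x y. 0 \<le> x \<and> 0 \<le> y \<and> x + y \<le> \<rho> \<longrightarrow> \<zeta> (x + y) \<le> \<zeta> x + \<zeta> y"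
    and P: "\<forall>x\<in>{0..\<rho>}. \<zeta> x \<ge> 0"
    and Z: "{x\<in>{0..\<rho>}. \<zeta> x = 0} = {0}"
    and O: "\<forall>x. x \<notin> {0..\<rho>} \<longrightarrow> \<zeta> x = 0"
    by blast+
  show "continuous_on {0..\<rho>} \<zeta>" "mono_on {0..\<rho>} \<zeta>" by (fact C, fact M)
  show "\<And>x y. 0 \<le> x \<Longrightarrow> 0 \<le> y \<Longrightarrow> x + y \<le> \<rho> \<Longrightarrow> \<zeta> (x + y) \<le> \<zeta> x + \<zeta> y"
    using SA by blast
  show "\<And>x. x \<notin> {0..\<rho>} \<Longrightarrow> \<zeta> x = 0" using O by blast
  have z0: "0 \<in> {x\<in>{0..\<rho>}. \<zeta> x = 0}" unfolding Z by simp
  then show "\<zeta> 0 = 0" "0 \<le> \<rho>" by simp_all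
  show "\<zeta> x > 0" if "0 < x" "x \<le> \<rho>" for x
  proof -
    have "\<zeta> x \<ge> 0" using P that by simp
    moreover have "\<zeta> x \<noteq> 0"
    proof
      assume "\<zeta> x = 0"
      then have "x \<in> {x\<in>{0..\<rho>}. \<zeta> x = 0}" using that by simp
      then have "x \<in> {0::real}" unfolding Z .
      then show False using that by simp
    qed
    ultimately show ?thesis by simp
  qed
qed

lemma subadd_nat:
  assumes "\<zeta> \<in> classA \<rho>" "x \<ge> 0" "real n * x \<le> \<rho>"
  shows "\<zeta> (real n * x) \<le> real n * \<zeta> x"
  using assms(3)
proof (induction n)
  case 0 then show ?case using classA_facts[OF assms(1)] by simp
next
  case (Suc n)
  have nx: "real n * x \<le> \<rho>" using Suc.prems assms(2) by (simp add: algebra_simps)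
  have "\<zeta> (real (Suc n) * x) = \<zeta> (real n * x + x)" by (simp add: algebra_simps)
  also have "\<dots> \<le> \<zeta> (real n * x) + \<zeta> x"
    using classA_facts(6)[OF assms(1), of "real n * x" x] Suc.prems assms(2)
    by (simp add: algebra_simps)
  also have "\<dots> \<le> real n * \<zeta> x + \<zeta> x" using Suc.IH nx by simp
  finally show ?case by (simp add: algebra_simps)
qed

lemma lower_linear:
  assumes "\<zeta> \<in> classA \<rho>" "\<rho> > 0"
  shows "\<exists>c>0. \<forall>t. 0 < t \<and> t \<le> \<rho>/2 \<longrightarrow> c * t \<le> \<zeta> t"
proof -
  note F = classA_facts[OF assms(1)]
  define c where "c = \<zeta> (\<rho>/2) / \<rho>"
  have cpos: "c > 0" unfolding c_def using F(5)[of "\<rho>/2"] assms(2) by simp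
  have "c * t \<le> \<zeta> t" if t: "0 < t" "t \<le> \<rho>/2" for t
  proof -
    define n where "n = nat \<lfloor>\<rho>/t\<rfloor>"
    have fl0: "0 \<le> \<lfloor>\<rho>/t\<rfloor>" using t assms(2) by simp
    have rn: "real n = real_of_int \<lfloor>\<rho>/t\<rfloor>" unfolding n_def using fl0 by simp
    have fl: "real n \<le> \<rho>/t" "\<rho>/t < real n + 1"
      unfolding rn by (rule of_int_floor_le, rule real_of_int_floor_add_one_gt)
    have n1: "real n * t \<le> \<rho>" using fl(1) t by (simp add: pos_le_divide_eq)
    have n2: "\<rho> - t < real n * t"
    proof -
      have "\<rho> < (real n + 1) * t" using fl(2) t by (simp add: pos_divide_less_eq)
      then show ?thesis by (simp add: algebra_simps)
    qed
    have "\<zeta> (\<rho>/2) \<le> \<zeta> (real n * t)"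
    proof (rule mono_onD[OF F(2)])
      show "\<rho>/2 \<in> {0..\<rho>}" using assms(2) by simp
      show "real n * t \<in> {0..\<rho>}" using n1 t by simp
      show "\<rho>/2 \<le> real n * t" using n2 t by linarith
    qed
    also have "\<dots> \<le> real n * \<zeta> t" using subadd_nat[OF assms(1) _ n1] t by simp
    also have "\<dots> \<le> (\<rho>/t) * \<zeta> t"
      using fl(1) F(5)[of t] t assms by (intro mult_right_mono) auto
    finally have h: "\<zeta> (\<rho>/2) \<le> (\<rho>/t) * \<zeta> t" .
    have "\<zeta> (\<rho>/2) * t \<le> (\<rho>/t) * \<zeta> t * t" using h t by (intro mult_right_mono) auto
    also have "\<dots> = \<rho> * \<zeta> t" using t by simp
    finally have "\<zeta> (\<rho>/2) * t \<le> \<rho> * \<zeta> t" .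
    then show ?thesis unfolding c_def using assms(2)
      by (simp add: pos_divide_le_eq mult.commute)
  qed
  with cpos show ?thesis by blast
qed

lemma k_facts:
  assumes "\<zeta> \<in> classAplus \<rho>" "\<rho> < 1"
  shows "\<rho> > 0" "k_m \<zeta> = ereal (real_of_ereal (k_m \<zeta>))" "real_of_ereal (k_m \<zeta>) > 0"
    "((\<lambda>t. ln (\<zeta> t) / ln t) \<longlongrightarrow> real_of_ereal (k_m \<zeta>)) (at_right 0)"
proof -
  have A: "\<zeta> \<in> classA \<rho>" and eq: "k_m \<zeta> = k_M \<zeta>" and pos: "k_m \<zeta> > 0"
    using assms by (auto simp: classAplus_def)
  note F = classA_facts[OF A]
  have "eventually (\<lambda>t. 0 < ereal (ln (\<zeta> t) / ln t)) (at_right 0)"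
    using less_LiminfD[OF pos[unfolded k_m_def]] .
  then have "eventually (\<lambda>t. 0 < ln (\<zeta> t) / ln t) (at_right 0)" by simp
  then obtain b where b: "b > 0" "\<And>y. 0 < y \<Longrightarrow> y < b \<Longrightarrow> 0 < ln (\<zeta> y) / ln y"
    unfolding eventually_at_right_field by auto
  have "0 < ln (\<zeta> (b/2)) / ln (b/2)" using b(2)[of "b/2"] b(1) by simp
  then have "\<zeta> (b/2) \<noteq> 0" by (cases "\<zeta> (b/2) = 0") simp_all
  then have "b/2 \<in> {0..\<rho>}" using F(7) by blast
  then show rpos: "\<rho> > 0" using b by auto
  obtain c where c: "c > 0" "\<And>t. 0 < t \<Longrightarrow> t \<le> \<rho>/2 \<Longrightarrow> c * t \<le> \<zeta> t"
    using lower_linear[OF A rpos] by blast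
  have "eventually (\<lambda>t. ereal (ln (\<zeta> t) / ln t) \<le> 2) (at_right 0)"
    unfolding eventually_at_right_field
  proof (intro exI[of _ "min (min c (\<rho>/2)) (1/2)"] conjI allI impI)
    show "0 < min (min c (\<rho>/2)) (1/2)" using c rpos by auto
    fix t :: real assume t: "0 < t" "t < min (min c (\<rho>/2)) (1/2)"
    have lt: "ln t < 0" using t by auto
    have z: "c * t \<le> \<zeta> t" using c t by auto
    have ctp: "c * t > 0" using c t by auto
    have "ln (c * t) \<le> ln (\<zeta> t)" using z ctp by simp
    moreover have "ln (c*t) = ln c + ln t" using c t by (simp add: ln_mult)
    moreover have "ln t \<le> ln c" using t c by simp
    ultimately have "2 * ln t \<le> ln (\<zeta> t)" by linarith
    then have "ln (\<zeta> t) / ln t \<le> 2" using lt by (simp add: divide_le_eq)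
    then show "ereal (ln (\<zeta> t) / ln t) \<le> 2" by simp
  qed
  then have "k_M \<zeta> \<le> 2" unfolding k_M_def by (rule Limsup_bounded)
  then have le2: "k_m \<zeta> \<le> 2" by (simp only: eq)
  obtain kk where kk: "k_m \<zeta> = ereal kk"
    using le2 pos by (cases "k_m \<zeta>") simp_all
  show keq: "k_m \<zeta> = ereal (real_of_ereal (k_m \<zeta>))" by (simp add: kk)
  show "real_of_ereal (k_m \<zeta>) > 0" using pos by (simp add: kk)
  define ff where "ff = (\<lambda>t::real. ereal (ln (\<zeta> t) / ln t))"
  have l1: "Liminf (at_right 0) ff = k_m \<zeta>" unfolding k_m_def ff_def ..
  have l2: "Limsup (at_right 0) ff = k_m \<zeta>" unfolding eq k_M_def ff_def ..
  have "(ff \<longlongrightarrow> k_m \<zeta>) (at_right 0)"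
    using tendsto_iff_Liminf_eq_Limsup[of "at_right (0::real)" ff "k_m \<zeta>", OF trivial_limit_at_right_real] l1 l2
    by blast
  then have "((\<lambda>t. ereal (ln (\<zeta> t) / ln t)) \<longlongrightarrow> ereal kk) (at_right 0)"
    unfolding ff_def kk .
  then have "((\<lambda>t. ln (\<zeta> t) / ln t) \<longlongrightarrow> kk) (at_right 0)"
    by (simp only: lim_ereal)
  then show "((\<lambda>t. ln (\<zeta> t) / ln t) \<longlongrightarrow> real_of_ereal (k_m \<zeta>)) (at_right 0)"
    unfolding kk real_of_ereal.simps .
qed



lemma inv_le_aux1:
  fixes a b c :: real
  assumes "0 < a" "0 < b" "b \<le> c * a" shows "1 / a \<le> c / b"
  using assms by (simp add: field_simps)

lemma inv_le_aux2:
  fixes a b c :: real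
  assumes "0 < a" "0 < b" "c * a \<le> b" shows "c / b \<le> 1 / a"
  using assms by (simp add: field_simps)

lemma mdim_formula:
  fixes T :: "'g \<Rightarrow> 'x::metric_space \<Rightarrow> 'x" and F :: "nat \<Rightarrow> 'g set"
  assumes cpt: "compact (UNIV::'x set)" and cont: "\<And>g. continuous_on UNIV (T g)"
    and Fn: "\<And>n. finite (F n) \<and> F n \<noteq> {}"
    and rho1: "diameter (UNIV::'x set) < 1"
    and fin: "upper_mdim F T dist < \<infinity>"
    and z: "\<zeta> \<in> classAplus (diameter (UNIV::'x set))"
  shows "upper_mdim F T (compose_metric dist \<zeta>) =
           ereal (real_of_ereal (upper_mdim F T dist) / real_of_ereal (k_m \<zeta>))"
    "lower_mdim F T (compose_metric dist \<zeta>) =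
           ereal (real_of_ereal (lower_mdim F T dist) / real_of_ereal (k_m \<zeta>))"
proof -
  define \<rho> where "\<rho> = diameter (UNIV::'x set)"
  define k where "k = real_of_ereal (k_m \<zeta>)"
  define \<theta> where "\<theta> = (compose_metric dist \<zeta> :: 'x \<Rightarrow> 'x \<Rightarrow> real)"
  define A where "A r e = limsup (\<lambda>n. ereal (ln (sep_num T (F n) r e) / real (card (F n))))"
    for r :: "'x \<Rightarrow> 'x \<Rightarrow> real" and e
  define g where "g t = ereal (1 / \<bar>ln t\<bar>) * A dist t" for t
  define h where "h e = ereal (1 / \<bar>ln e\<bar>) * A \<theta> e" for e
  have Ud: "upper_mdim F T dist = Limsup (at_right 0) g"
    and Ld: "lower_mdim F T dist = Liminf (at_right 0) g"
    and Ut: "upper_mdim F T \<theta> = Limsup (at_right 0) h"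
    and Lt: "lower_mdim F T \<theta> = Liminf (at_right 0) h"
    unfolding upper_mdim_def lower_mdim_def g_def h_def A_def by simp_all
  have zA: "\<zeta> \<in> classA \<rho>" using z by (simp add: classAplus_def \<rho>_def)
  note ZF = classA_facts[OF zA]
  have r1: "\<rho> < 1" using rho1 by (simp add: \<rho>_def)
  note KF = k_facts[OF z[folded \<rho>_def] r1, folded k_def]
  have rpos: "\<rho> > 0" and kpos: "k > 0"
    and ktend: "((\<lambda>t. ln (\<zeta> t) / ln t) \<longlongrightarrow> k) (at_right 0)" using KF by auto
  have bnd: "bounded (UNIV::'x set)" using cpt by (rule compact_imp_bounded)
  have dle: "dist a b \<le> \<rho>" for a b :: 'x
    unfolding \<rho>_def using diameter_bounded_bound[OF bnd] by simp
  have card_pos: "real (card (F n)) > 0" for n using Fn[of n] by (simp add: card_gt_0_iff)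
  have bddd: "bdd_above ((\<lambda>S. real (card S)) ` sepset T (F n) dist t)" if "t > 0" for n t
    by (rule sepset_bdd[OF cpt cont]) (use Fn[of n] that in auto)
  have S2: "sepset T (F n) \<theta> e \<subseteq> sepset T (F n) dist t"
    if "0 < t" "t \<le> \<rho>" "\<zeta> t \<le> e" for n t e
  proof
    fix S assume "S \<in> sepset T (F n) \<theta> e"
    then have S: "finite S" "\<And>x y. x \<in> S \<Longrightarrow> y \<in> S \<Longrightarrow> x \<noteq> y \<Longrightarrow>
        \<exists>g\<in>F n. \<zeta> (dist (T g x) (T g y)) > e"
      using Fn[of n] by (auto simp: sepset_iff \<theta>_def compose_metric_def)
    have "\<exists>g\<in>F n. dist (T g x) (T g y) > t" if xy: "x \<in> S" "y \<in> S" "x \<noteq> y" for x y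
    proof -
      obtain g where g: "g \<in> F n" "\<zeta> (dist (T g x) (T g y)) > e" using S(2)[OF xy] by blast
      have "dist (T g x) (T g y) > t"
      proof (rule ccontr)
        assume "\<not> ?thesis"
        then have "\<zeta> (dist (T g x) (T g y)) \<le> \<zeta> t"
          using \<open>0<t\<close> \<open>t \<le> \<rho>\<close> by (intro mono_onD[OF ZF(2)]) auto
        then show False using g \<open>\<zeta> t \<le> e\<close> by simp
      qed
      then show ?thesis using g by blast
    qed
    then show "S \<in> sepset T (F n) dist t" using S Fn[of n] by (auto simp: sepset_iff)
  qed
  have S3: "sepset T (F n) dist t \<subseteq> sepset T (F n) \<theta> e"
    if "0 < t" "t \<le> \<rho>" "e < \<zeta> t" for n t e
  proof
    fix S assume "S \<in> sepset T (F n) dist t"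
    then have S: "finite S" "\<And>x y. x \<in> S \<Longrightarrow> y \<in> S \<Longrightarrow> x \<noteq> y \<Longrightarrow>
        \<exists>g\<in>F n. dist (T g x) (T g y) > t"
      using Fn[of n] by (auto simp: sepset_iff)
    have "\<exists>g\<in>F n. \<zeta> (dist (T g x) (T g y)) > e" if xy: "x \<in> S" "y \<in> S" "x \<noteq> y" for x y
    proof -
      obtain g where g: "g \<in> F n" "dist (T g x) (T g y) > t" using S(2)[OF xy] by blast
      have "\<zeta> t \<le> \<zeta> (dist (T g x) (T g y))"
        using \<open>0<t\<close> \<open>t \<le> \<rho>\<close> g dle by (intro mono_onD[OF ZF(2)]) auto
      then show ?thesis using g \<open>e < \<zeta> t\<close> by force
    qed
    then show "S \<in> sepset T (F n) \<theta> e" using S Fn[of n]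
      by (auto simp: sepset_iff \<theta>_def compose_metric_def)
  qed
  have Ad0: "0 \<le> A dist t" if "t > 0" for t
    unfolding A_def
    using limsup_ln_mono[of "\<lambda>n. sep_num T (F n) dist t" "\<lambda>n. sep_num T (F n) dist t"]
       sep_num_le[OF bddd[OF that] order_refl] card_pos by auto
  have S2A: "A \<theta> e \<le> A dist t \<and> 0 \<le> A \<theta> e"
    if "0 < t" "t \<le> \<rho>" "\<zeta> t \<le> e" for t e
    unfolding A_def
    using limsup_ln_mono[of "\<lambda>n. sep_num T (F n) \<theta> e" "\<lambda>n. sep_num T (F n) dist t"]
      sep_num_le[OF bddd[OF that(1)] S2[OF that]] card_pos by auto
  have S3A: "A dist t \<le> A \<theta> e"
    if tp: "0 < t" "t \<le> \<rho>" "0 < e" "e < \<zeta> t" for t e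
  proof -
    obtain t' where t': "0 \<le> t'" "t' \<le> t" "\<zeta> t' = e"
      using IVT'[of \<zeta> 0 e t] tp ZF(3) continuous_on_subset[OF ZF(1), of "{0..t}"] by auto
    have t'p: "0 < t'" using t' tp ZF(3) by (cases "t' = 0") auto
    have bt: "bdd_above ((\<lambda>S. real (card S)) ` sepset T (F n) \<theta> e)" for n
      using sep_num_le(3)[OF bddd[OF t'p] S2[OF t'p]] t' tp by auto
    show ?thesis unfolding A_def
      using limsup_ln_mono[of "\<lambda>n. sep_num T (F n) dist t" "\<lambda>n. sep_num T (F n) \<theta> e"]
        sep_num_le[OF bt S3[OF tp(1,2,4)]] card_pos by auto
  qed
  have zrho: "\<zeta> \<rho> > 0" using ZF(5)[OF rpos order_refl] .
  define tt where "tt e = (SOME t. 0 < t \<and> t \<le> \<rho> \<and> \<zeta> t = e)" for e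
  have tt: "0 < tt e \<and> tt e \<le> \<rho> \<and> \<zeta> (tt e) = e" if te: "0 < e" "e \<le> \<zeta> \<rho>" for e
  proof -
    obtain t where t: "0 \<le> t" "t \<le> \<rho>" "\<zeta> t = e"
      using IVT'[of \<zeta> 0 e \<rho>] te ZF(1,3) rpos by auto
    have "0 < t" using t te ZF(3) by (cases "t = 0") auto
    then have "\<exists>t. 0 < t \<and> t \<le> \<rho> \<and> \<zeta> t = e" using t by blast
    then show ?thesis unfolding tt_def by (rule someI_ex)
  qed
  have ev_small: "eventually (\<lambda>e. e < c) (at_right (0::real))" if "c > 0" for c
    unfolding eventually_at_right_field using that by blast
  have ev_pos: "eventually (\<lambda>e. 0 < e) (at_right (0::real))"
    using eventually_at_right_less[of "0::real"] by simp
  have E0: "eventually (\<lambda>e. 0 < e \<and> e < \<zeta> \<rho>) (at_right 0)"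
    using ev_pos ev_small[OF zrho] by (rule eventually_conj)
  have FLtt: "filterlim tt (at_right 0) (at_right 0)"
    unfolding filterlim_at
  proof (rule conjI)
    show "eventually (\<lambda>e. tt e \<in> {0<..} \<and> tt e \<noteq> 0) (at_right 0)"
      using E0 by (rule eventually_mono) (use tt in force)
    show "(tt \<longlongrightarrow> 0) (at_right 0)"
    proof (rule order_tendstoI)
      fix a :: real assume "a < 0"
      show "eventually (\<lambda>e. a < tt e) (at_right 0)"
        using E0 by (rule eventually_mono) (use tt \<open>a<0\<close> in force)
    next
      fix a :: real assume a: "0 < a"
      define m where "m = min a \<rho>"
      have m: "0 < m" "m \<le> \<rho>" "m \<le> a" using a rpos by (auto simp: m_def)
      have zm: "0 < \<zeta> m" using ZF(5) m by auto
      have zmr: "\<zeta> m \<le> \<zeta> \<rho>" using m by (intro mono_onD[OF ZF(2)]) auto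
      have "eventually (\<lambda>e. 0 < e \<and> e < \<zeta> m) (at_right 0)"
        using ev_pos ev_small[OF zm] by (rule eventually_conj)
      then show "eventually (\<lambda>e. tt e < a) (at_right 0)"
      proof (rule eventually_mono)
        fix e assume e: "0 < e \<and> e < \<zeta> m"
        then have te: "0 < tt e" "tt e \<le> \<rho>" "\<zeta> (tt e) = e" using tt[of e] zmr by auto
        show "tt e < a"
        proof (rule ccontr)
          assume "\<not> tt e < a"
          then have "m \<le> tt e" using m by auto
          then have "\<zeta> m \<le> \<zeta> (tt e)" using m te by (intro mono_onD[OF ZF(2)]) auto
          then show False using e te by simp
        qed
      qed
    qed
  qed
  have FL2: "filterlim (\<lambda>e::real. 2*e) (at_right 0) (at_right 0)"
    unfolding filterlim_at
    by (intro conjI eventually_mono[OF ev_pos] tendsto_mult_right_zero tendsto_ident_at) auto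
  have FLtt2: "filterlim (\<lambda>e. tt (2*e)) (at_right 0) (at_right 0)"
    by (rule filterlim_compose[OF FLtt FL2])
  have zt: "(\<zeta> \<longlongrightarrow> 0) (at_right 0)"
  proof -
    have "(\<zeta> \<longlongrightarrow> \<zeta> 0) (at 0 within {0..\<rho>})"
      using ZF(1) rpos unfolding continuous_on_def by auto
    then show ?thesis using at_within_Icc_at_right[OF rpos] ZF(3) by simp
  qed
  have ev_tr: "eventually (\<lambda>t. 0 < t \<and> t < \<rho>) (at_right (0::real))"
    using ev_pos ev_small[OF rpos] by (rule eventually_conj)
  have FLz: "filterlim \<zeta> (at_right 0) (at_right 0)"
    unfolding filterlim_at
    by (intro conjI zt eventually_mono[OF ev_tr]) (auto dest: ZF(5))
  have FLh2: "filterlim (\<lambda>e::real. e/2) (at_right 0) (at_right 0)"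
    unfolding filterlim_at
    by (intro conjI eventually_mono[OF ev_pos] tendsto_divide_zero tendsto_ident_at) auto
  have FLpsi: "filterlim (\<lambda>t. \<zeta> t / 2) (at_right 0) (at_right 0)"
    by (rule filterlim_compose[OF FLh2 FLz])
  define P where "P \<gamma> t \<longleftrightarrow> 0 < t \<and> t < \<rho> \<and> k - \<gamma> < ln (\<zeta> t) / ln t
       \<and> ln (\<zeta> t) / ln t < k + \<gamma> \<and> ln 2 < \<gamma> * (- ln t)" for \<gamma> t
  have Eg: "eventually (P \<gamma>) (at_right 0)" if g: "0 < \<gamma>" for \<gamma>
  proof -
    have e1: "eventually (\<lambda>t. dist (ln (\<zeta> t) / ln t) k < \<gamma>) (at_right 0)"
      using tendstoD[OF ktend g] .
    have e2: "eventually (\<lambda>t. t < exp (- ln 2 / \<gamma>)) (at_right (0::real))"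
      by (rule ev_small) simp
    show ?thesis using eventually_conj[OF ev_tr eventually_conj[OF e1 e2]]
    proof (rule eventually_mono)
      fix t assume H: "(0 < t \<and> t < \<rho>) \<and> dist (ln (\<zeta> t) / ln t) k < \<gamma> \<and> t < exp (- ln 2 / \<gamma>)"
      then have "ln t < ln (exp (- ln 2 / \<gamma>))" by (subst ln_less_cancel_iff) auto
      then have "ln t < - ln 2 / \<gamma>" by simp
      then have "\<gamma> * ln t < \<gamma> * (- ln 2 / \<gamma>)" using g by (rule mult_strict_left_mono)
      then have "ln 2 < \<gamma> * (- ln t)" using g by simp
      then show "P \<gamma> t" using H unfolding P_def dist_real_def by auto
    qed
  qed
  have Pfacts: "ln t < 0 \<and> ln (\<zeta> t) < (k - \<gamma>) * ln t \<and> (k + \<gamma>) * ln t < ln (\<zeta> t)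
      \<and> 0 < \<zeta> t \<and> 0 < - ln t" if "P \<gamma> t" for \<gamma> t
  proof -
    have t: "0 < t" "t < \<rho>" "k - \<gamma> < ln (\<zeta> t) / ln t" "ln (\<zeta> t) / ln t < k + \<gamma>"
      using that unfolding P_def by auto
    have lt: "ln t < 0" using t r1 by simp
    have eq: "ln (\<zeta> t) = (ln (\<zeta> t) / ln t) * ln t" using lt by simp
    have "(ln (\<zeta> t) / ln t) * ln t < (k - \<gamma>) * ln t"
      using t(3) lt by (rule mult_strict_right_mono_neg)
    moreover have "(k + \<gamma>) * ln t < (ln (\<zeta> t) / ln t) * ln t"
      using t(4) lt by (rule mult_strict_right_mono_neg)
    ultimately show ?thesis using eq lt ZF(5)[of t] t by auto
  qed
  have ereal_split: "ereal (a * b) * X = ereal a * (ereal b * X)" for a b X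
    by (metis mult.assoc times_ereal.simps(1))
  have nonbot: "at_right (0::real) \<noteq> bot" by (rule trivial_limit_at_right_real)
  have UP: "Limsup (at_right 0) h \<le> ereal (1/(k-\<gamma>)) * Limsup (at_right 0) g"
    if g0: "0 < \<gamma>" "\<gamma> < k/2" for \<gamma>
  proof -
    have E1: "eventually (\<lambda>e. P \<gamma> (tt e)) (at_right 0)"
      using FLtt Eg[OF g0(1)] by (simp add: filterlim_iff)
    have ev: "eventually (\<lambda>e. h e \<le> ereal (1/(k-\<gamma>)) * g (tt e)) (at_right 0)"
      using eventually_conj[OF E0 E1]
    proof (rule eventually_mono)
      fix e assume H: "(0 < e \<and> e < \<zeta> \<rho>) \<and> P \<gamma> (tt e)"
      define t where "t = tt e"
      have te: "0 < t" "t \<le> \<rho>" "\<zeta> t = e" using tt[of e] H unfolding t_def by auto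
      note PF = Pfacts[OF H[THEN conjunct2, folded t_def]]
      have le: "ln e < (k - \<gamma>) * ln t" using PF te by simp
      have kg: "0 < k - \<gamma>" using g0 by simp
      have pos: "0 < (k - \<gamma>) * (- ln t)" using kg PF by (intro mult_pos_pos) auto
      have "1 / \<bar>ln e\<bar> \<le> 1/(k-\<gamma>) * (1 / \<bar>ln t\<bar>)"
      proof -
        have "\<bar>ln e\<bar> = - ln e" "\<bar>ln t\<bar> = - ln t" using le pos PF by auto
        moreover have "1 / (- ln e) \<le> 1 / ((k - \<gamma>) * (- ln t))"
          using pos le by (intro frac_le) auto
        ultimately show ?thesis by simp
      qed
      moreover have A1: "A \<theta> e \<le> A dist t" "0 \<le> A dist t"
        using S2A[of t e] te Ad0[of t] by auto
      ultimately have "h e \<le> ereal (1/(k-\<gamma>) * (1 / \<bar>ln t\<bar>)) * A dist t"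
        unfolding h_def
        by (intro order_trans[OF ereal_mult_left_mono[OF A1(1)]] ereal_mult_right_mono) auto
      then show "h e \<le> ereal (1/(k-\<gamma>)) * g (tt e)"
        unfolding g_def t_def[symmetric] ereal_split .
    qed
    have "Limsup (at_right 0) h \<le> Limsup (at_right 0) (\<lambda>e. ereal (1/(k-\<gamma>)) * g (tt e))"
      by (rule Limsup_mono[OF ev])
    also have "\<dots> = ereal (1/(k-\<gamma>)) * Limsup (at_right 0) (\<lambda>e. g (tt e))"
      using g0 by (intro Limsup_ereal_mult_left nonbot) simp
    also have "\<dots> \<le> ereal (1/(k-\<gamma>)) * Limsup (at_right 0) g"
      using g0 by (intro ereal_mult_left_mono Limsup_compose_le[OF FLtt]) simp
    finally show ?thesis .
  qed
  have key: "0 < - ln e \<and> - ln e < (k + 2*\<gamma>) * (- ln t)"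
    if Pt: "P \<gamma> t" and g0: "0 < \<gamma>" "\<gamma> < k/2" and zt2: "\<zeta> t = 2 * e" and e0: "0 < e" for \<gamma> t e
  proof -
    note PF = Pfacts[OF Pt]
    have l2: "ln 2 < \<gamma> * (- ln t)" using Pt unfolding P_def by auto
    have "ln (\<zeta> t) = ln 2 + ln e" using zt2 e0 by (simp add: ln_mult)
    then have "- ln e = - ln (\<zeta> t) + ln 2" by simp
    moreover have "- ln (\<zeta> t) < (k + \<gamma>) * (- ln t)" using PF by simp
    moreover have "0 < - ln (\<zeta> t)"
    proof -
      have "(k - \<gamma>) * ln t < 0" using g0 PF by (intro mult_pos_neg) auto
      then show ?thesis using PF by linarith
    qed
    moreover have "0 < ln (2::real)" by simp
    moreover have "(k + 2*\<gamma>)*(- ln t) = (k+\<gamma>)*(- ln t) + \<gamma>*(- ln t)" by (simp add: algebra_simps)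
    ultimately show ?thesis using l2 by linarith
  qed
  have LL: "ereal (1/(k+2*\<gamma>)) * Liminf (at_right 0) g \<le> Liminf (at_right 0) h"
    if g0: "0 < \<gamma>" "\<gamma> < k/2" for \<gamma>
  proof -
    have E1: "eventually (\<lambda>e. P \<gamma> (tt (2*e))) (at_right 0)"
      using FLtt2 Eg[OF g0(1)] by (simp add: filterlim_iff)
    have E0': "eventually (\<lambda>e. 0 < e \<and> e < \<zeta> \<rho> / 2) (at_right 0)"
      using ev_pos ev_small[of "\<zeta> \<rho> / 2"] zrho by (intro eventually_conj) auto
    have ev: "eventually (\<lambda>e. ereal (1/(k+2*\<gamma>)) * g (tt (2*e)) \<le> h e) (at_right 0)"
      using eventually_conj[OF E0' E1]
    proof (rule eventually_mono)
      fix e assume H: "(0 < e \<and> e < \<zeta> \<rho> / 2) \<and> P \<gamma> (tt (2*e))"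
      define t where "t = tt (2*e)"
      have te: "0 < t" "t \<le> \<rho>" "\<zeta> t = 2*e" using tt[of "2*e"] H unfolding t_def by auto
      have Pt: "P \<gamma> t" using H unfolding t_def by auto
      note PF = Pfacts[OF Pt]
      have K: "0 < - ln e" "- ln e < (k + 2*\<gamma>) * (- ln t)" using key[OF Pt g0 te(3)] H by auto
      have "1/(k+2*\<gamma>) * (1 / \<bar>ln t\<bar>) \<le> 1 / \<bar>ln e\<bar>"
      proof -
        have "\<bar>ln e\<bar> = - ln e" "\<bar>ln t\<bar> = - ln t" using K PF by auto
        moreover have "1 / ((k + 2*\<gamma>) * (- ln t)) \<le> 1 / (- ln e)"
          using K by (intro frac_le) auto
        ultimately show ?thesis by simp
      qed
      moreover have A1: "A dist t \<le> A \<theta> e" "0 \<le> A dist t"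
        using S3A[of t e] te Ad0[of t] H by auto
      ultimately have "ereal (1/(k+2*\<gamma>) * (1 / \<bar>ln t\<bar>)) * A dist t \<le> h e"
        unfolding h_def
        by (intro order_trans[OF ereal_mult_right_mono ereal_mult_left_mono[OF A1(1)]]) auto
      then show "ereal (1/(k+2*\<gamma>)) * g (tt (2*e)) \<le> h e"
        unfolding g_def t_def[symmetric] ereal_split .
    qed
    have "ereal (1/(k+2*\<gamma>)) * Liminf (at_right 0) g \<le> ereal (1/(k+2*\<gamma>)) * Liminf (at_right 0) (\<lambda>e. g (tt (2*e)))"
      using g0 by (intro ereal_mult_left_mono Liminf_compose_ge[OF FLtt2]) simp
    also have "\<dots> = Liminf (at_right 0) (\<lambda>e. ereal (1/(k+2*\<gamma>)) * g (tt (2*e)))"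
      using g0 by (intro Liminf_ereal_mult_left[symmetric] nonbot) simp
    also have "\<dots> \<le> Liminf (at_right 0) h"
      by (rule Liminf_mono[OF ev])
    finally show ?thesis .
  qed
  have UL: "Limsup (at_right 0) g \<le> ereal (k+2*\<gamma>) * Limsup (at_right 0) h"
    if g0: "0 < \<gamma>" "\<gamma> < k/2" for \<gamma>
  proof -
    have ev: "eventually (\<lambda>t. g t \<le> ereal (k+2*\<gamma>) * h (\<zeta> t / 2)) (at_right 0)"
      using Eg[OF g0(1)]
    proof (rule eventually_mono)
      fix t assume Pt: "P \<gamma> t"
      define e where "e = \<zeta> t / 2"
      note PF = Pfacts[OF Pt]
      have te: "0 < t" "t \<le> \<rho>" using Pt unfolding P_def by auto
      have e0: "0 < e" "\<zeta> t = 2 * e" "e < \<zeta> t" using PF unfolding e_def by auto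
      have K: "0 < - ln e" "- ln e < (k + 2*\<gamma>) * (- ln t)" using key[OF Pt g0 e0(2) e0(1)] by auto
      have "1 / \<bar>ln t\<bar> \<le> (k+2*\<gamma>) * (1 / \<bar>ln e\<bar>)"
      proof -
        have "\<bar>ln e\<bar> = - ln e" "\<bar>ln t\<bar> = - ln t" using K PF by auto
        moreover have "1 / (- ln t) \<le> (k+2*\<gamma>) / (- ln e)"
          by (rule inv_le_aux1) (use K PF in auto)
        ultimately show ?thesis by simp
      qed
      moreover have A1: "A dist t \<le> A \<theta> e" "0 \<le> A dist t"
        using S3A[of t e] te e0 Ad0[of t] by auto
      ultimately have "g t \<le> ereal ((k+2*\<gamma>) * (1 / \<bar>ln e\<bar>)) * A \<theta> e"
        unfolding g_def
        by (intro order_trans[OF ereal_mult_left_mono[OF A1(1)] ereal_mult_right_mono])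
          (use A1 in auto)
      then show "g t \<le> ereal (k+2*\<gamma>) * h (\<zeta> t / 2)"
        unfolding h_def e_def[symmetric] ereal_split .
    qed
    have "Limsup (at_right 0) g \<le> Limsup (at_right 0) (\<lambda>t. ereal (k+2*\<gamma>) * h (\<zeta> t / 2))"
      by (rule Limsup_mono[OF ev])
    also have "\<dots> = ereal (k+2*\<gamma>) * Limsup (at_right 0) (\<lambda>t. h (\<zeta> t / 2))"
      using g0 kpos by (intro Limsup_ereal_mult_left nonbot) simp
    also have "\<dots> \<le> ereal (k+2*\<gamma>) * Limsup (at_right 0) h"
      using g0 kpos by (intro ereal_mult_left_mono Limsup_compose_le[OF FLpsi]) simp
    finally show ?thesis .
  qed
  have LU: "ereal (k-\<gamma>) * Liminf (at_right 0) h \<le> Liminf (at_right 0) g"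
    if g0: "0 < \<gamma>" "\<gamma> < k/2" for \<gamma>
  proof -
    have ev: "eventually (\<lambda>t. ereal (k-\<gamma>) * h (\<zeta> t) \<le> g t) (at_right 0)"
      using Eg[OF g0(1)]
    proof (rule eventually_mono)
      fix t assume Pt: "P \<gamma> t"
      note PF = Pfacts[OF Pt]
      have te: "0 < t" "t \<le> \<rho>" using Pt unfolding P_def by auto
      have kg: "0 < k - \<gamma>" using g0 by simp
      have pos: "0 < (k - \<gamma>) * (- ln t)" using kg PF by (intro mult_pos_pos) auto
      have le: "(k - \<gamma>) * (- ln t) < - ln (\<zeta> t)" using PF by simp
      have "(k-\<gamma>) * (1 / \<bar>ln (\<zeta> t)\<bar>) \<le> 1 / \<bar>ln t\<bar>"
      proof -
        have lz: "ln (\<zeta> t) < 0" using le pos by linarith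
        have "\<bar>ln (\<zeta> t)\<bar> = - ln (\<zeta> t)" "\<bar>ln t\<bar> = - ln t"
          by (rule abs_of_neg[OF lz], rule abs_of_neg[OF PF[THEN conjunct1]])
        moreover have "(k-\<gamma>) / (- ln (\<zeta> t)) \<le> 1 / (- ln t)"
          using le pos PF[THEN conjunct1] lz by (intro inv_le_aux2) linarith+
        ultimately show ?thesis by simp
      qed
      moreover have A1: "A \<theta> (\<zeta> t) \<le> A dist t" "0 \<le> A \<theta> (\<zeta> t)"
        using S2A[of t "\<zeta> t"] te by auto
      ultimately have "ereal ((k-\<gamma>) * (1 / \<bar>ln (\<zeta> t)\<bar>)) * A \<theta> (\<zeta> t) \<le> g t"
        unfolding g_def
        by (intro order_trans[OF ereal_mult_right_mono ereal_mult_left_mono[OF A1(1)]]) auto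
      then show "ereal (k-\<gamma>) * h (\<zeta> t) \<le> g t"
        unfolding h_def ereal_split .
    qed
    have "ereal (k-\<gamma>) * Liminf (at_right 0) h \<le> ereal (k-\<gamma>) * Liminf (at_right 0) (\<lambda>t. h (\<zeta> t))"
      using g0 by (intro ereal_mult_left_mono Liminf_compose_ge[OF FLz]) simp
    also have "\<dots> = Liminf (at_right 0) (\<lambda>t. ereal (k-\<gamma>) * h (\<zeta> t))"
      using g0 by (intro Liminf_ereal_mult_left[symmetric] nonbot) simp
    also have "\<dots> \<le> Liminf (at_right 0) g"
      by (rule Liminf_mono[OF ev])
    finally show ?thesis .
  qed
  have g_nonneg: "eventually (\<lambda>t. 0 \<le> g t) (at_right 0)"
    using ev_pos
  proof (rule eventually_mono)
    fix t :: real assume "0 < t"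
    then show "0 \<le> g t"
      using ereal_mult_left_mono[OF Ad0[of t], of "ereal (1 / \<bar>ln t\<bar>)"] by (simp add: g_def)
  qed
  have h_nonneg: "eventually (\<lambda>e. 0 \<le> h e) (at_right 0)"
    using E0
  proof (rule eventually_mono)
    fix e :: real assume e: "0 < e \<and> e < \<zeta> \<rho>"
    then have "0 \<le> A \<theta> e" using S2A[of "tt e" e] tt[of e] by auto
    then show "0 \<le> h e"
      using ereal_mult_left_mono[of 0 "A \<theta> e" "ereal (1 / \<bar>ln e\<bar>)"] by (simp add: h_def)
  qed
  have Lg0: "0 \<le> Liminf (at_right 0) g" by (rule Liminf_bounded[OF g_nonneg])
  have Lh0: "0 \<le> Liminf (at_right 0) h" by (rule Liminf_bounded[OF h_nonneg])
  have LUg: "Liminf (at_right 0) g \<le> Limsup (at_right 0) g" by (rule Liminf_le_Limsup[OF nonbot])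
  have LUh: "Liminf (at_right 0) h \<le> Limsup (at_right 0) h" by (rule Liminf_le_Limsup[OF nonbot])
  have Ufin: "Limsup (at_right 0) g < \<infinity>" using fin Ud by simp
  obtain u where u: "Limsup (at_right 0) g = ereal u" using Ufin Lg0 LUg by (cases "Limsup (at_right 0) g") auto
  obtain l where l: "Liminf (at_right 0) g = ereal l" using Ufin Lg0 LUg by (cases "Liminf (at_right 0) g") auto
  have "0 \<le> ereal u" using Lg0 LUg unfolding u by (rule order_trans)
  then have u0: "0 \<le> u" by simp
  have l0: "0 \<le> l" using Lg0 l by simp
  have g4: "0 < k/4" "k/4 < k/2" using kpos by auto
  have "Limsup (at_right 0) h \<le> ereal (1/(k-k/4) * u)" using UP[OF g4] u by simp
  then obtain v where v: "Limsup (at_right 0) h = ereal v"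
    using Lh0 LUh by (cases "Limsup (at_right 0) h") auto
  have "0 \<le> ereal v" using Lh0 LUh unfolding v by (rule order_trans)
  then have v0: "0 \<le> v" by simp
  have "u = v * k"
  proof (rule squeeze_real[OF kpos v0])
    fix \<gamma> :: real assume g0: "0 < \<gamma>" "\<gamma> < k/2"
    have "v \<le> 1/(k-\<gamma>) * u" using UP[OF g0] u v by simp
    then have "v * (k-\<gamma>) \<le> u" using g0 by (simp add: field_simps)
    moreover have "u \<le> (k+2*\<gamma>) * v" using UL[OF g0] u v by simp
    ultimately show "v * (k-\<gamma>) \<le> u \<and> u \<le> v * (k + 2 * \<gamma>)" by (simp add: mult.commute)
  qed
  then have vu: "v = u / k" using kpos by simp
  have "ereal (k - k/4) * Liminf (at_right 0) h \<le> ereal l" using LU[OF g4] l by simp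
  then obtain w where w: "Liminf (at_right 0) h = ereal w"
    using Lh0 kpos by (cases "Liminf (at_right 0) h") auto
  have w0: "0 \<le> w" using Lh0 w by simp
  have "l = w * k"
  proof (rule squeeze_real[OF kpos w0])
    fix \<gamma> :: real assume g0: "0 < \<gamma>" "\<gamma> < k/2"
    have "1/(k+2*\<gamma>) * l \<le> w" using LL[OF g0] l w by simp
    then have "l \<le> w * (k+2*\<gamma>)" using g0 kpos by (simp add: field_simps)
    moreover have "(k-\<gamma>) * w \<le> l" using LU[OF g0] l w by simp
    ultimately show "w * (k-\<gamma>) \<le> l \<and> l \<le> w * (k + 2 * \<gamma>)" by (simp add: mult.commute)
  qed
  then have wl: "w = l / k" using kpos by simp
  show "upper_mdim F T (compose_metric dist \<zeta>) =
           ereal (real_of_ereal (upper_mdim F T dist) / real_of_ereal (k_m \<zeta>))"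
    using Ut Ud u v vu unfolding \<theta>_def k_def by simp
  show "lower_mdim F T (compose_metric dist \<zeta>) =
           ereal (real_of_ereal (lower_mdim F T dist) / real_of_ereal (k_m \<zeta>))"
    using Lt Ld l w wl unfolding \<theta>_def k_def by simp
qed



lemma center_in_Btilde:
  assumes z: "\<zeta> \<in> classAplus \<rho>" and r1: "\<rho> < 1" and e: "0 < e"
  shows "\<zeta> \<in> Btilde \<rho> \<zeta> e"
proof -
  have zA: "\<zeta> \<in> classA \<rho>" using z by (simp add: classAplus_def)
  have "\<zeta> x * (x powr e - 1) < \<zeta> x - \<zeta> x \<and> \<zeta> x - \<zeta> x < \<zeta> x * (1 - x powr e) / x powr e"
    if x: "x \<in> {0<..\<rho>}" for x
  proof -
    have zx: "0 < \<zeta> x" using classA_facts(5)[OF zA] x by auto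
    have x1: "0 < x" "x < 1" using x r1 by auto
    have p: "x powr e < 1" using powr_less_mono2[OF e _ x1(2)] x1 by simp
    have pp: "0 < x powr e" using x1 by simp
    have "\<zeta> x * (x powr e - 1) < 0" using zx p by (simp add: mult_pos_neg)
    moreover have "0 < \<zeta> x * (1 - x powr e) / x powr e" using zx p pp by simp
    ultimately show ?thesis by simp
  qed
  then show ?thesis using z unfolding Btilde_def by blast
qed

lemma k_diff:
  assumes z: "\<zeta> \<in> classAplus \<rho>" and r1: "\<rho> < 1" and e: "0 < e"
    and z': "\<zeta>' \<in> Btilde \<rho> \<zeta> e"
  shows "\<bar>real_of_ereal (k_m \<zeta>') - real_of_ereal (k_m \<zeta>)\<bar> \<le> e"
proof -
  have z'A: "\<zeta>' \<in> classAplus \<rho>" and B: "\<forall>x\<in>{0<..\<rho>}. \<zeta> x * (x powr e - 1) < \<zeta>' x - \<zeta> x \<and>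
      \<zeta>' x - \<zeta> x < \<zeta> x * (1 - x powr e) / x powr e"
    using z' unfolding Btilde_def by auto
  note K = k_facts[OF z r1] and K' = k_facts[OF z'A r1]
  have zA: "\<zeta> \<in> classA \<rho>" using z by (simp add: classAplus_def)
  define f where "f t = ln (\<zeta> t) / ln t" for t
  define f' where "f' t = ln (\<zeta>' t) / ln t" for t
  have lim: "((\<lambda>t. \<bar>f' t - f t\<bar>) \<longlongrightarrow> \<bar>real_of_ereal (k_m \<zeta>') - real_of_ereal (k_m \<zeta>)\<bar>) (at_right 0)"
    unfolding f_def f'_def by (intro tendsto_rabs tendsto_diff K(4) K'(4))
  have ev: "eventually (\<lambda>t. \<bar>f' t - f t\<bar> \<le> e) (at_right 0)"
    unfolding eventually_at_right_field
  proof (intro exI[of _ \<rho>] conjI allI impI)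
    show "0 < \<rho>" by (rule K(1))
    fix t :: real assume t: "0 < t" "t < \<rho>"
    have Bt: "\<zeta> t * (t powr e - 1) < \<zeta>' t - \<zeta> t" "\<zeta>' t - \<zeta> t < \<zeta> t * (1 - t powr e) / t powr e"
      using B t by auto
    have zt: "0 < \<zeta> t" using classA_facts(5)[OF zA] t by auto
    have pp: "0 < t powr e" using t by simp
    have lo: "\<zeta> t * t powr e < \<zeta>' t" using Bt(1) by (simp add: algebra_simps)
    have "\<zeta> t * (1 - t powr e) / t powr e = \<zeta> t / t powr e - \<zeta> t" using pp
      by (simp add: field_simps)
    then have hi: "\<zeta>' t < \<zeta> t / t powr e" using Bt(2) by simp
    have lt: "ln t < 0" using t r1 by simp
    have p1: "0 < \<zeta> t * t powr e" using zt pp by simp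
    have "ln (\<zeta> t * t powr e) < ln (\<zeta>' t)" using lo p1 by simp
    then have L1: "ln (\<zeta> t) + e * ln t < ln (\<zeta>' t)" using zt t by (simp add: ln_mult ln_powr)
    have p2: "0 < \<zeta>' t" using lo p1 by simp
    have "ln (\<zeta>' t) < ln (\<zeta> t / t powr e)" using hi p2 by simp
    then have L2: "ln (\<zeta>' t) < ln (\<zeta> t) - e * ln t" using zt t by (simp add: ln_div ln_powr)
    have d: "f' t - f t = (ln (\<zeta>' t) - ln (\<zeta> t)) / ln t" unfolding f_def f'_def
      by (simp add: diff_divide_distrib)
    have "\<bar>ln (\<zeta>' t) - ln (\<zeta> t)\<bar> \<le> e * \<bar>ln t\<bar>" using L1 L2 lt by (simp add: abs_if) 
    moreover have "\<bar>f' t - f t\<bar> = \<bar>ln (\<zeta>' t) - ln (\<zeta> t)\<bar> / \<bar>ln t\<bar>"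
      unfolding d by (rule abs_divide)
    moreover have nl: "0 < \<bar>ln t\<bar>" using lt by simp
    ultimately show "\<bar>f' t - f t\<bar> \<le> e" by (simp only: pos_divide_le_eq[OF nl])
  qed
  show ?thesis by (rule tendsto_upperbound[OF lim ev trivial_limit_at_right_real])
qed

lemma cont_recip_map:
  fixes M :: "('x::metric_space \<Rightarrow> 'x \<Rightarrow> real) \<Rightarrow> ereal"
  assumes r1: "\<rho> < 1"
    and formula: "\<And>\<zeta>. \<zeta> \<in> classAplus \<rho> \<Longrightarrow> M (compose_metric dist \<zeta>) = ereal (c / real_of_ereal (k_m \<zeta>))"
  shows "continuous_map (topW \<rho> dist) euclideanreal (\<lambda>\<theta>. real_of_ereal (M \<theta>))"
  unfolding continuous_map
proof (intro conjI allI impI)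
  show "(\<lambda>\<theta>. real_of_ereal (M \<theta>)) ` topspace (topW \<rho> dist) \<subseteq> topspace euclideanreal" by simp
  fix U :: "real set" assume "openin euclideanreal U"
  then have oU: "open U" by simp
  let ?S = "{(compose_metric dist :: (real \<Rightarrow> real) \<Rightarrow> 'x \<Rightarrow> 'x \<Rightarrow> real) ` Btilde \<rho> \<zeta> e | \<zeta> e. \<zeta> \<in> classAplus \<rho> \<and> e > 0}"
  have topsp: "topspace (topW \<rho> dist) = \<Union>?S" unfolding topW_def by simp
  show "openin (topW \<rho> dist) {x \<in> topspace (topW \<rho> dist). real_of_ereal (M x) \<in> U}"
  proof (subst openin_subopen, intro ballI)
    fix \<theta> assume th: "\<theta> \<in> {x \<in> topspace (topW \<rho> dist). real_of_ereal (M x) \<in> U}"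
    then obtain \<zeta>1 e1 \<zeta> where z1: "\<zeta>1 \<in> classAplus \<rho>" "e1 > 0" and zB: "\<zeta> \<in> Btilde \<rho> \<zeta>1 e1"
      and thz: "\<theta> = compose_metric dist \<zeta>"
      unfolding topsp by auto
    have z: "\<zeta> \<in> classAplus \<rho>" using zB by (simp add: Btilde_def)
    note K = k_facts[OF z r1]
    define k0 where "k0 = real_of_ereal (k_m \<zeta>)"
    have k0: "0 < k0" using K unfolding k0_def by simp
    have inU: "c / k0 \<in> U" using th thz formula[OF z] unfolding k0_def by simp
    obtain r where r: "r > 0" "ball (c / k0) r \<subseteq> U" using oU inU by (meson openE)
    have "isCont (\<lambda>k. c / k) k0" using k0 by (intro continuous_intros) simp
    then have "(\<lambda>k. c / k) \<midarrow>k0\<rightarrow> c / k0" by (simp add: isCont_def)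
    from LIM_D[OF this r(1)] obtain s where s: "s > 0"
      "\<And>x. x \<noteq> k0 \<and> norm (x - k0) < s \<Longrightarrow> norm (c / x - c / k0) < r" by blast
    define \<epsilon> where "\<epsilon> = s / 2"
    have eps: "0 < \<epsilon>" "\<epsilon> < s" using s unfolding \<epsilon>_def by auto
    let ?T = "(compose_metric dist :: (real \<Rightarrow> real) \<Rightarrow> 'x \<Rightarrow> 'x \<Rightarrow> real) ` Btilde \<rho> \<zeta> \<epsilon>"
    have TS: "?T \<in> ?S" using z eps by blast
    show "\<exists>T. openin (topW \<rho> dist) T \<and> \<theta> \<in> T \<and> T \<subseteq> {x \<in> topspace (topW \<rho> dist). real_of_ereal (M x) \<in> U}"
    proof (intro exI conjI)
      show "openin (topW \<rho> dist) ?T" unfolding topW_def openin_topology_generated_by_iff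
        using TS by (rule generate_topology_on.Basis)
      show "\<theta> \<in> ?T" unfolding thz using center_in_Btilde[OF z r1 eps(1)] by blast
      show "?T \<subseteq> {x \<in> topspace (topW \<rho> dist). real_of_ereal (M x) \<in> U}"
      proof
        fix x assume x: "x \<in> ?T"
        then obtain \<zeta>' where z': "\<zeta>' \<in> Btilde \<rho> \<zeta> \<epsilon>" and xz: "x = compose_metric dist \<zeta>'" by blast
        have z'A: "\<zeta>' \<in> classAplus \<rho>" using z' by (simp add: Btilde_def)
        have kd: "\<bar>real_of_ereal (k_m \<zeta>') - k0\<bar> \<le> \<epsilon>" using k_diff[OF z r1 eps(1) z'] unfolding k0_def .
        have "dist (c / real_of_ereal (k_m \<zeta>')) (c / k0) < r"
        proof (cases "real_of_ereal (k_m \<zeta>') = k0")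
          case True then show ?thesis using r by simp
        next
          case False
          then show ?thesis using s(2)[of "real_of_ereal (k_m \<zeta>')"] kd eps by (simp add: dist_norm)
        qed
        then have "c / real_of_ereal (k_m \<zeta>') \<in> U" using r(2) by (simp add: dist_commute subset_iff)
        moreover have "x \<in> topspace (topW \<rho> dist)" using x TS unfolding topsp by blast
        ultimately show "x \<in> {x \<in> topspace (topW \<rho> dist). real_of_ereal (M x) \<in> U}"
          using formula[OF z'A] xz by simp
      qed
    qed
  qed
qed


theorem mainTheorem16:
  fixes T :: "'g::{group_add, countable} \<Rightarrow> 'x::metric_space \<Rightarrow> 'x"
    and F :: "nat \<Rightarrow> 'g set"
  assumes "continuous_action T"
    and "compact (UNIV :: 'x set)"
    and "folner_seq F"
    and "diameter (UNIV :: 'x set) < 1"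
    and "(\<lambda>(x::'x, y::'x). dist x y) ` (UNIV \<times> UNIV) = {0..diameter (UNIV :: 'x set)}"
    and "upper_mdim F T dist < \<infinity>"
  shows "(\<forall>\<theta>\<in>classAplus_d (diameter (UNIV :: 'x set)) dist.
            \<bar>upper_mdim F T \<theta>\<bar> \<noteq> \<infinity> \<and> \<bar>lower_mdim F T \<theta>\<bar> \<noteq> \<infinity>)
       \<and> continuous_map (topW (diameter (UNIV :: 'x set)) dist) euclideanreal
            (\<lambda>\<theta>. real_of_ereal (upper_mdim F T \<theta>))
       \<and> continuous_map (topW (diameter (UNIV :: 'x set)) dist) euclideanreal
            (\<lambda>\<theta>. real_of_ereal (lower_mdim F T \<theta>))"
proof -
  have cont: "\<And>g. continuous_on UNIV (T g)" using assms(1) unfolding continuous_action_def by blast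
  have Fn: "\<And>n. finite (F n) \<and> F n \<noteq> {}" using assms(3) unfolding folner_seq_def by blast
  note MF = mdim_formula[OF assms(2) cont Fn assms(4) assms(6)]
  show ?thesis
  proof (intro conjI ballI)
    fix \<theta> :: "'x \<Rightarrow> 'x \<Rightarrow> real" assume "\<theta> \<in> classAplus_d (diameter (UNIV :: 'x set)) dist"
    then obtain \<zeta> where z: "\<zeta> \<in> classAplus (diameter (UNIV :: 'x set))"
      and th: "\<theta> = compose_metric dist \<zeta>" unfolding classAplus_d_def by blast
    show "\<bar>upper_mdim F T \<theta>\<bar> \<noteq> \<infinity>" using MF(1)[OF z] th by simp
    show "\<bar>lower_mdim F T \<theta>\<bar> \<noteq> \<infinity>" using MF(2)[OF z] th by simp
  next
    show "continuous_map (topW (diameter (UNIV :: 'x set)) dist) euclideanreal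
            (\<lambda>\<theta>. real_of_ereal (upper_mdim F T \<theta>))"
      by (rule cont_recip_map[OF assms(4)]) (rule MF(1))
  next
    show "continuous_map (topW (diameter (UNIV :: 'x set)) dist) euclideanreal
            (\<lambda>\<theta>. real_of_ereal (lower_mdim F T \<theta>))"
      by (rule cont_recip_map[OF assms(4)]) (rule MF(2))
  qed
qed

end
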